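(* Define functions $f_n$ on nonnegative integers $k$ by $f_1(k)=\frac{-1}{(k+1)(k+2)}$ and $$f_{n+1}(k)=-(k+1)f_n(k+2)+(2k+1)f_n(k+1)-kf_n(k)\qquad(n\ge1).$$ Then for every $n\ge2$, $f_n(0)=-\frac{B_n}{n}$, where $B_n$ are the Bernoulli numbers.
   Context: Bernoulli numbers: $\frac{t}{e^t-1}=\sum_{n\ge0}B_n\frac{t^n}{n!}$. *)

theory Defs
  imports Complex_Main "HOL-Computational_Algebra.Formal_Power_Series"
begin

definition bernoulli :: "nat \<Rightarrow> real" where
  "bernoulli n = fact n * fps_nth (fps_X / (fps_exp 1 - 1)) n"

text \<open>f n k; the paper's f_1 is f 1. f 0 is an unused dummy value.\<close>
fun f :: "nat \<Rightarrow> nat \<Rightarrow> real" where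
  "f 0 k = 0"
| "f (Suc 0) k = -1 / ((real k + 1) * (real k + 2))"
| "f (Suc (Suc n)) k =
     - (real k + 1) * f (Suc n) (k + 2) + (2 * real k + 1) * f (Suc n) (k + 1)
     - real k * f (Suc n) k"

end

theory Submission
  imports Defs "HOL-Analysis.Analysis"
begin

definition Ip :: "real poly \<Rightarrow> real" where
  "Ip p = integral {0..1} (poly p)"

lemma Ip_integrable: "poly p integrable_on {0..1::real}"
  by (intro integrable_continuous_interval continuous_intros)

lemma Ip_add: "Ip (p + q) = Ip p + Ip q"
proof -
  have "poly (p + q) = (\<lambda>x. poly p x + poly q x)" by auto
  then show ?thesis unfolding Ip_def by (simp add: integral_add Ip_integrable)
qed

lemma Ip_minus: "Ip (- p) = - Ip p"
proof -
  have "poly (- p) = (\<lambda>x. - poly p x)" by auto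
  then show ?thesis unfolding Ip_def by (simp add: integral_neg Ip_integrable)
qed

lemma Ip_diff: "Ip (p - q) = Ip p - Ip q"
  using Ip_add[of p "-q"] Ip_minus[of q] by simp

lemma Ip_smult: "Ip (smult c p) = c * Ip p"
proof -
  have "poly (smult c p) = (\<lambda>x. c * poly p x)" by auto
  then show ?thesis unfolding Ip_def by simp
qed

lemma Ip_pderiv: "Ip (pderiv p) = poly p 1 - poly p 0"
proof -
  have "((poly (pderiv p)) has_integral (poly p 1 - poly p 0)) {0..1}"
    apply (rule fundamental_theorem_of_calculus)
     apply simp
    apply (subst has_real_derivative_iff_has_vector_derivative[symmetric])
    apply (rule DERIV_subset[OF poly_DERIV])
    apply simp
    done
  then show ?thesis unfolding Ip_def by (rule integral_unique)
qed

lemma Ip_parts: "Ip (p * pderiv q) = poly (p*q) 1 - poly (p*q) 0 - Ip (pderiv p * q)"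
proof -
  have "Ip (pderiv (p*q)) = poly (p*q) 1 - poly (p*q) 0" by (rule Ip_pderiv)
  moreover have "pderiv (p*q) = p * pderiv q + pderiv p * q" by (simp add: pderiv_mult mult.commute)
  ultimately show ?thesis by (simp add: Ip_add)
qed

definition pU :: "real poly" where "pU = [:0,1:]"
definition pS :: "real poly" where "pS = 1 - pU"

lemma poly_pU[simp]: "poly pU x = x" by (simp add: pU_def)
lemma poly_pS[simp]: "poly pS x = 1 - x" by (simp add: pS_def)
lemma pderiv_pU[simp]: "pderiv pU = 1" by (simp add: pU_def pderiv_pCons)
lemma pderiv_pS[simp]: "pderiv pS = -1" by (simp add: pS_def pderiv_diff)

lemma pU_pS: "pU = 1 - pS" by (simp add: pS_def)

lemma Ip_cmult: "Ip ([:c:] * p) = c * Ip p"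
  using Ip_smult[of c p] by simp

lemma pS_pderiv_pow: "pS * pderiv (pS ^ k) = - ([:of_nat k:] * pS ^ k)"
proof (cases k)
  case 0 then show ?thesis by simp
next
  case (Suc m)
  then show ?thesis
    by (simp del: power_Suc add: pderiv_power_Suc mult_ac) (simp add: mult_ac)
qed

lemma poly_ident1:
  fixes q s C :: "real poly"
  shows "q * (1-s) * s + (1-s) * (1-s) * (- (C * q)) = (C+C+1) * (s * q) - (C+1) * (s * s * q) - C * q"
  by (simp add: algebra_simps)

lemma moment_step:
  "Ip (pS^k * (- (pU * pderiv (pU * pS * p)))) =
     - (real k + 1) * Ip (pS^(k+2) * p) + (2 * real k + 1) * Ip (pS^(k+1) * p) - real k * Ip (pS^k * p)"
proof -
  define K where "K = [:real k:]"
  have "Ip (pS^k * (- (pU * pderiv (pU * pS * p)))) = - Ip ((pS^k * pU) * pderiv (pU*pS*p))"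
    by (simp add: Ip_minus mult_ac)
  also have "\<dots> = Ip (pderiv (pS^k * pU) * (pU*pS*p))"
    by (subst Ip_parts) simp
  also have "pderiv (pS^k * pU) * (pU*pS*p) = (pS^k * pU * pS + pU * pU * (pS * pderiv (pS^k))) * p"
    by (simp add: pderiv_mult algebra_simps)
  also have "\<dots> = (pS^k*p) * (1-pS) * pS + (1-pS) * (1-pS) * (- (K * (pS^k*p)))"
    unfolding pS_pderiv_pow pU_pS K_def by (simp add: algebra_simps)
  also have "\<dots> = (K+K+1) * (pS * (pS^k*p)) - (K+1) * (pS * pS * (pS^k*p)) - K * (pS^k*p)"
    by (rule poly_ident1)
  also have "Ip \<dots> = (2 * real k + 1) * Ip (pS^(k+1) * p) - (real k + 1) * Ip (pS^(k+2) * p) - real k * Ip (pS^k * p)"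
    by (simp only: distrib_right mult_1_left Ip_add Ip_diff K_def Ip_cmult)
       (simp add: algebra_simps)
  finally show ?thesis by (simp add: algebra_simps)
qed

fun phi :: "nat \<Rightarrow> real poly" where
  "phi 0 = 0"
| "phi (Suc 0) = - pU"
| "phi (Suc (Suc n)) = - (pU * pderiv (pU * pS * phi (Suc n)))"

fun Qp :: "nat \<Rightarrow> real poly" where
  "Qp 0 = pU"
| "Qp (Suc n) = (pU^3 - pU^2) * pderiv (Qp n)"

lemma pderiv_pow_pS: "pderiv (pS ^ Suc m) = - ([:real (Suc m):] * pS ^ m)"
  by (simp del: power_Suc add: pderiv_power_Suc)

lemma pderiv_pow_pU: "pderiv (pU ^ Suc m) = [:real (Suc m):] * pU ^ m"
  by (simp del: power_Suc add: pderiv_power_Suc)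

lemma Ip_base: "Ip (pS^k * pU) = 1/(real k + 1) - 1/(real k + 2)"
proof -
  define F where "F = [:1/(real k+2):] * pS^(Suc (Suc k)) - [:1/(real k+1):] * pS^(Suc k)"
  have c1: "[:1/(real k+2):] * [:real (Suc (Suc k)):] = 1"
    by (simp add: one_pCons field_simps)
  have c2: "[:1/(real k+1):] * [:real (Suc k):] = 1"
    by (simp add: one_pCons field_simps)
  have "pderiv F = pS^k - pS^k * pS"
    unfolding F_def pderiv_diff pderiv_mult pderiv_pow_pS
    by (simp del: power_Suc add: mult.assoc[symmetric] c1 c2) (simp add: algebra_simps)
  also have "\<dots> = pS^k * pU" by (simp add: pU_pS algebra_simps)
  finally have d: "pderiv F = pS^k * pU" .
  have "Ip (pS^k * pU) = poly F 1 - poly F 0" using Ip_pderiv[of F] d by simp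
  also have "\<dots> = 1/(real k + 1) - 1/(real k + 2)" unfolding F_def by simp
  finally show ?thesis .
qed

lemma f_moment: "f (Suc n) k = Ip (pS^k * phi (Suc n))"
proof (induction n arbitrary: k)
  case 0
  have "Ip (pS^k * phi (Suc 0)) = - (1/(real k + 1) - 1/(real k + 2))"
    using Ip_base[of k] by (simp add: Ip_minus)
  also have "\<dots> = -1 / ((real k + 1) * (real k + 2))" by (simp add: field_simps)
  finally show ?case by simp
next
  case (Suc n)
  show ?case
    using moment_step[of k "phi (Suc n)"] Suc.IH[of k] Suc.IH[of "k+1"] Suc.IH[of "k+2"]
    by simp
qed

lemma e_cube: "pU^3 - pU^2 = - (pU * pS * pU)"
  by (simp add: pS_def algebra_simps power2_eq_square power3_eq_cube)

lemma Qp_phi: "Qp (Suc n) = pU * pS * phi (Suc n)"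
proof (induction n)
  case 0
  show ?case unfolding Qp.simps phi.simps e_cube pderiv_pU by (simp add: mult_ac)
next
  case (Suc n)
  have "Qp (Suc (Suc n)) = (pU^3 - pU^2) * pderiv (pU * pS * phi (Suc n))"
    using Suc.IH by simp
  then show ?case by (simp only: e_cube phi.simps) (simp add: mult_ac)
qed

lemma f_Q: "f (Suc (Suc n)) 0 = Ip (Qp (Suc n))"
proof -
  have p: "phi (Suc (Suc n)) = - (pU * pderiv (Qp (Suc n)))" by (simp only: phi.simps Qp_phi)
  have "f (Suc (Suc n)) 0 = Ip (phi (Suc (Suc n)))"
    using f_moment[of "Suc n" 0] by simp
  also have "\<dots> = - (poly (pU * Qp (Suc n)) 1 - poly (pU * Qp (Suc n)) 0 - Ip (pderiv pU * Qp (Suc n)))"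
    unfolding p by (simp add: Ip_minus Ip_parts)
  also have "\<dots> = Ip (Qp (Suc n))" by (simp add: Qp_phi)
  finally show ?thesis .
qed

lemma c_rec: "Ip (pU^k * Qp (Suc n)) = (real k + 2) * Ip (pU^(k+1) * Qp n) - (real k + 3) * Ip (pU^(k+2) * Qp n)"
proof -
  have e: "pU^k * Qp (Suc n) = (pU^Suc (Suc (Suc k)) - pU^Suc (Suc k)) * pderiv (Qp n)"
    by (simp add: algebra_simps power2_eq_square power3_eq_cube)
  have "Ip (pU^k * Qp (Suc n)) = - Ip (pderiv (pU^Suc (Suc (Suc k)) - pU^Suc (Suc k)) * Qp n)"
    unfolding e by (subst Ip_parts) simp
  also have "\<dots> = - Ip ([:real (Suc (Suc (Suc k))):] * (pU^(k+2) * Qp n) - [:real (Suc (Suc k)):] * (pU^(k+1) * Qp n))"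
    unfolding pderiv_diff pderiv_pow_pU by (simp add: algebra_simps)
  also have "\<dots> = (real k + 2) * Ip (pU^(k+1) * Qp n) - (real k + 3) * Ip (pU^(k+2) * Qp n)"
    by (simp only: Ip_minus Ip_diff Ip_cmult) (simp add: algebra_simps)
  finally show ?thesis .
qed

definition Dw :: "real poly fps \<Rightarrow> real poly fps" where
  "Dw F = Abs_fps (\<lambda>n. pderiv (fps_nth F n))"
definition Ev :: "real \<Rightarrow> real poly fps \<Rightarrow> real fps" where
  "Ev a F = Abs_fps (\<lambda>n. poly (fps_nth F n) a)"
definition IF :: "real poly fps \<Rightarrow> real fps" where
  "IF F = Abs_fps (\<lambda>n. Ip (fps_nth F n))"

lemma Dw_nth[simp]: "fps_nth (Dw F) n = pderiv (fps_nth F n)" by (simp add: Dw_def)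
lemma Ev_nth[simp]: "fps_nth (Ev a F) n = poly (fps_nth F n) a" by (simp add: Ev_def)
lemma IF_nth[simp]: "fps_nth (IF F) n = Ip (fps_nth F n)" by (simp add: IF_def)

lemma Dw_add[simp]: "Dw (F + G) = Dw F + Dw G" by (simp add: fps_eq_iff pderiv_add)
lemma Dw_minus[simp]: "Dw (- F) = - Dw F" by (simp add: fps_eq_iff pderiv_minus)
lemma Dw_diff[simp]: "Dw (F - G) = Dw F - Dw G" by (simp add: fps_eq_iff pderiv_diff)
lemma Dw_const[simp]: "Dw (fps_const c) = fps_const (pderiv c)"
  by (simp add: fps_eq_iff)
lemma Dw_1[simp]: "Dw 1 = 0" by (simp add: fps_eq_iff)
lemma Dw_0[simp]: "Dw 0 = 0" by (simp add: fps_eq_iff)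
lemma Dw_X[simp]: "Dw fps_X = 0" by (simp add: fps_eq_iff fps_X_def)

lemma pderiv_sum': "pderiv (\<Sum>i\<in>A. g i) = (\<Sum>i\<in>A. pderiv (g i))"
  using higher_pderiv_sum[of 1 g A] by simp

lemma Dw_mult[simp]: "Dw (F * G) = Dw F * G + F * Dw G"
proof (rule fps_ext)
  fix n
  have "fps_nth (Dw (F*G)) n = (\<Sum>i=0..n. pderiv (fps_nth F i) * fps_nth G (n-i) + fps_nth F i * pderiv (fps_nth G (n-i)))"
    by (simp add: fps_mult_nth pderiv_sum' pderiv_mult add.commute mult.commute)
  then show "fps_nth (Dw (F*G)) n = fps_nth (Dw F * G + F * Dw G) n"
    by (simp add: fps_mult_nth sum.distrib)
qed

lemma Dw_power_Suc: "Dw (F ^ Suc k) = of_nat (Suc k) * F ^ k * Dw F"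
proof (induction k)
  case 0 then show ?case by simp
next
  case (Suc k)
  have "Dw (F ^ Suc (Suc k)) = Dw (F * F ^ Suc k)" by simp
  also have "\<dots> = Dw F * F ^ Suc k + F * (of_nat (Suc k) * F ^ k * Dw F)"
    using Suc.IH by simp
  also have "\<dots> = of_nat (Suc (Suc k)) * F ^ Suc k * Dw F" by (simp add: algebra_simps)
  finally show ?case .
qed

lemma Dw_power: "Dw (F ^ k) = of_nat k * F ^ (k - 1) * Dw F"
  by (cases k) (simp_all add: Dw_power_Suc del: power_Suc)

lemma pderiv_of_nat[simp]: "pderiv (of_nat m :: real poly) = 0"
  by (simp add: of_nat_poly pderiv_pCons)

lemma Dw_deriv: "Dw (fps_deriv F) = fps_deriv (Dw F)"
  by (simp add: fps_eq_iff pderiv_mult pderiv_add)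

lemma Ev_add[simp]: "Ev a (F + G) = Ev a F + Ev a G" by (simp add: fps_eq_iff)
lemma Ev_minus[simp]: "Ev a (- F) = - Ev a F" by (simp add: fps_eq_iff)
lemma Ev_diff[simp]: "Ev a (F - G) = Ev a F - Ev a G" by (simp add: fps_eq_iff)
lemma Ev_mult[simp]: "Ev a (F * G) = Ev a F * Ev a G"
  by (simp add: fps_eq_iff fps_mult_nth poly_sum)
lemma Ev_const[simp]: "Ev a (fps_const c) = fps_const (poly c a)"
  by (simp add: fps_eq_iff)
lemma Ev_1[simp]: "Ev a 1 = 1" by (simp add: fps_eq_iff)
lemma Ev_0[simp]: "Ev a 0 = 0" by (simp add: fps_eq_iff)
lemma Ev_X[simp]: "Ev a fps_X = fps_X" by (simp add: fps_eq_iff fps_X_def)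
lemma Ev_power[simp]: "Ev a (F ^ k) = Ev a F ^ k" by (induction k) simp_all
lemma Ev_deriv: "Ev a (fps_deriv F) = fps_deriv (Ev a F)"
  by (simp add: fps_eq_iff of_nat_poly)

lemma IF_add[simp]: "IF (F + G) = IF F + IF G" by (simp add: fps_eq_iff Ip_add)
lemma IF_diff[simp]: "IF (F - G) = IF F - IF G" by (simp add: fps_eq_iff Ip_diff)
lemma IF_of_nat_mult: "IF (of_nat m * F) = of_nat m * IF F"
proof -
  have "of_nat m * F = fps_const (of_nat m) * F" by (simp add: fps_of_nat)
  moreover have "of_nat m * IF F = fps_const (of_nat m) * IF F" by (simp add: fps_of_nat)
  ultimately show ?thesis by (simp add: fps_eq_iff of_nat_poly Ip_cmult Ip_smult)
qed
lemma IF_deriv: "IF (fps_deriv F) = fps_deriv (IF F)"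
  by (simp add: fps_eq_iff of_nat_poly Ip_cmult Ip_smult)
lemma IF_Dw: "IF (Dw F) = Ev 1 F - Ev 0 F"
  by (simp add: fps_eq_iff Ip_pderiv)

lemma deriv_inv_gen:
  fixes D :: "'a::comm_ring_1 \<Rightarrow> 'a"
  assumes "P * I = 1" and "D (P * I) = D P * I + P * D I" and "D 1 = 0"
  shows "D I = - D P * I^2"
proof -
  have "D P * I + P * D I = 0" using assms by simp
  then have "(D P * I + P * D I) * I = 0" by simp
  then have "D P * I * I + (P * I) * D I = 0" by (simp add: algebra_simps)
  then have "D P * I * I + D I = 0" using assms(1) by simp
  then have "D I = - (D P * I * I)" by (simp add: eq_neg_iff_add_eq_0 add.commute)
  then show ?thesis by (simp add: power2_eq_square mult.assoc)
qed

definition Wf :: "real poly fps" where "Wf = fps_const pU"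
definition Xf :: "real poly fps" where "Xf = Abs_fps (\<lambda>n. monom (1 / fact n) n)"
definition Ef :: "real poly fps" where "Ef = Abs_fps (\<lambda>n. monom (1 / fact (Suc n)) (Suc n))"
definition E2f :: "real poly fps" where "E2f = Abs_fps (\<lambda>n. monom (1 / fact (Suc (Suc n))) (Suc (Suc n)))"

lemma pU_monom: "pU = monom 1 1" by (simp add: pU_def monom_Suc monom_0)

lemma pU_monom': "monom 1 (Suc 0) = pU" using pU_monom by simp

lemma X_rel: "Xf = 1 + fps_X * Ef"
proof (rule fps_ext)
  fix n show "fps_nth Xf n = fps_nth (1 + fps_X * Ef) n"
    by (cases n) (simp_all add: Xf_def Ef_def monom_0 one_pCons)
qed

lemma E_rel: "Ef = Wf + fps_X * E2f"
proof (rule fps_ext)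
  fix n show "fps_nth Ef n = fps_nth (Wf + fps_X * E2f) n"
    by (cases n) (simp_all add: Wf_def Ef_def E2f_def pU_monom)
qed

lemma fact_aux: "of_nat (Suc m) * (1 / fact (Suc m) :: real) = 1 / fact m"
proof -
  have "of_nat (Suc m) * (1 / fact (Suc m) :: real) = of_nat (Suc m) / (of_nat (Suc m) * fact m)"
    by (simp only: fact_Suc of_nat_mult) simp
  also have "\<dots> = 1 / fact m" by (simp del: of_nat_Suc)
  finally show ?thesis .
qed

lemma Dw_Xf: "Dw Xf = fps_X * Xf"
proof (rule fps_ext)
  fix n show "fps_nth (Dw Xf) n = fps_nth (fps_X * Xf) n"
    by (cases n) (simp_all add: Xf_def pderiv_monom fact_aux del: of_nat_Suc)
qed

lemma Dw_Ef: "Dw Ef = Xf"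
  by (rule fps_ext) (simp add: Xf_def Ef_def pderiv_monom fact_aux del: of_nat_Suc)

lemma Dw_E2f: "Dw E2f = Ef"
  by (rule fps_ext) (simp add: E2f_def Ef_def pderiv_monom fact_aux del: of_nat_Suc)

lemma Dw_Wf: "Dw Wf = 1" by (simp add: Wf_def)

lemma deriv_Wf: "fps_deriv Wf = 0" by (simp add: Wf_def)

lemma deriv_Xf: "fps_deriv Xf = Wf * Xf"
proof (rule fps_ext)
  fix n
  have l: "fps_nth (fps_deriv Xf) n = (of_nat (Suc n) :: real poly) * monom (1 / fact (Suc n)) (Suc n)"
    by (simp add: Xf_def del: of_nat_Suc)
  have r: "fps_nth (Wf * Xf) n = pU * monom (1/fact n) n" by (simp add: Wf_def Xf_def)
  have "(of_nat (Suc n) :: real poly) * monom (1 / fact (Suc n)) (Suc n) = monom (1/fact n) (Suc n)"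
    by (simp add: of_nat_poly smult_monom fact_aux del: of_nat_Suc)
  also have "\<dots> = pU * monom (1/fact n) n" by (simp add: pU_monom mult_monom)
  finally show "fps_nth (fps_deriv Xf) n = fps_nth (Wf * Xf) n" using l r by simp
qed

lemma Ep_rel: "fps_X * fps_deriv Ef = Wf * Xf - Ef"
proof -
  have "fps_deriv Xf = fps_X * fps_deriv Ef + Ef"
    by (subst X_rel) simp
  then show ?thesis using deriv_Xf by simp
qed

definition e1 :: "real fps" where "e1 = Abs_fps (\<lambda>n. 1 / fact (Suc n))"
definition e2 :: "real fps" where "e2 = Abs_fps (\<lambda>n. 1 / fact (Suc (Suc n)))"

lemma Ev0_Ef: "Ev 0 Ef = 0" by (rule fps_ext) (simp add: Ef_def poly_monom)
lemma Ev0_E2f: "Ev 0 E2f = 0" by (rule fps_ext) (simp add: E2f_def poly_monom)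
lemma Ev0_Wf: "Ev 0 Wf = 0" by (simp add: Wf_def)
lemma Ev1_Wf: "Ev 1 Wf = 1" by (simp add: Wf_def)
lemma Ev0_Xf: "Ev 0 Xf = 1"
proof (rule fps_ext)
  fix n show "fps_nth (Ev 0 Xf) n = fps_nth 1 n" by (cases n) (simp_all add: Xf_def poly_monom)
qed
lemma Ev1_Ef: "Ev 1 Ef = e1" by (rule fps_ext) (simp add: Ef_def e1_def poly_monom)
lemma Ev1_E2f: "Ev 1 E2f = e2" by (rule fps_ext) (simp add: E2f_def e2_def poly_monom)

lemma e1_rel: "fps_X * e1 = fps_exp 1 - 1"
proof (rule fps_ext)
  fix n show "fps_nth (fps_X * e1) n = fps_nth (fps_exp 1 - 1) n" by (cases n) (simp_all add: e1_def algebra_simps)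
qed

lemma e2_rel: "fps_X * e2 = e1 - 1"
proof (rule fps_ext)
  fix n show "fps_nth (fps_X * e2) n = fps_nth (e1 - 1) n" by (cases n) (simp_all add: e1_def e2_def)
qed

definition P1 :: "real poly fps" where "P1 = Ef + (1 - Wf) * Xf"
definition P2 :: "real poly fps" where "P2 = Ef + (1 - Wf)"

lemma P1_0: "fps_nth P1 0 = 1"
  by (simp add: P1_def Ef_def Xf_def Wf_def pU_monom' monom_0 one_pCons)
lemma P2_0: "fps_nth P2 0 = 1"
  by (simp add: P2_def Ef_def Wf_def pU_monom')

definition I1 :: "real poly fps" where "I1 = fps_right_inverse P1 1"
definition I2 :: "real poly fps" where "I2 = fps_right_inverse P2 1"

lemma P1_I1: "P1 * I1 = 1" unfolding I1_def by (rule fps_right_inverse) (simp add: P1_0)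
lemma P2_I2: "P2 * I2 = 1" unfolding I2_def by (rule fps_right_inverse) (simp add: P2_0)

lemma Dw_I1: "Dw I1 = - Dw P1 * I1^2"
  by (rule deriv_inv_gen[OF P1_I1]) simp_all
lemma Dw_I2: "Dw I2 = - Dw P2 * I2^2"
  by (rule deriv_inv_gen[OF P2_I2]) simp_all
lemma dt_I1: "fps_deriv I1 = - fps_deriv P1 * I1^2"
  by (rule deriv_inv_gen[OF P1_I1]) (simp_all add: algebra_simps)
lemma dt_I2: "fps_deriv I2 = - fps_deriv P2 * I2^2"
  by (rule deriv_inv_gen[OF P2_I2]) (simp_all add: algebra_simps)

lemma Dw_P1: "Dw P1 = Xf - Xf + (1 - Wf) * (fps_X * Xf)"
  by (simp add: P1_def Dw_Ef Dw_Wf Dw_Xf)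
lemma Dw_P2: "Dw P2 = Xf - 1"
  by (simp add: P2_def Dw_Ef Dw_Wf)
lemma dt_P1: "fps_deriv P1 = fps_deriv Ef + (1 - Wf) * (Wf * Xf)"
  by (simp add: P1_def deriv_Wf deriv_Xf)
lemma dt_P2: "fps_deriv P2 = fps_deriv Ef"
  by (simp add: P2_def deriv_Wf)

lemma pde_alg:
  fixes t W E Ep I1 I2 X :: "'a::idom"
  assumes hX: "X = 1 + t * E" and hEp: "t * Ep = W * X - E"
    and h1: "(E + (1 - W) * X) * I1 = 1" and h2: "(E + (1 - W)) * I2 = 1"
  shows "t * ((E * (- (Ep + (1 - W) * (W * X)) * I1\<^sup>2) + Ep * I1) * (E * (- (X - 1) * I2\<^sup>2) + X * I2))
       = t * ((E * (- (X - X + (1 - W) * (t * X)) * I1\<^sup>2) + X * I1) *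
              ((E * (- Ep * I2\<^sup>2) + Ep * I2) + (E * I2)^3 - (E * I2)^2))"
  using assms by algebra

lemma anti_alg:
  fixes t W E E2 I1 I2 X :: "'a::idom"
  assumes hX: "X = 1 + t * E" and hE: "E = W + t * E2"
    and h1: "(E + (1 - W) * X) * I1 = 1" and h2: "(E + (1 - W)) * I2 = 1"
  shows "E * I2 + E2 * (- (X - 1) * I2\<^sup>2) = (E * I1) * (E * (- (X - 1) * I2\<^sup>2) + X * I2)"
  using assms by algebra

definition U :: "real poly fps" where "U = Ef * I2"
definition Z :: "real poly fps" where "Z = Ef * I1"

lemma Dw_U: "Dw U = Ef * (- (Xf - 1) * I2\<^sup>2) + Xf * I2"
  by (simp add: U_def Dw_I2 Dw_P2 Dw_Ef algebra_simps)
lemma dt_U: "fps_deriv U = Ef * (- fps_deriv Ef * I2\<^sup>2) + fps_deriv Ef * I2"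
  by (simp add: U_def dt_I2 dt_P2)
lemma Dw_Z: "Dw Z = Ef * (- (Xf - Xf + (1 - Wf) * (fps_X * Xf)) * I1\<^sup>2) + Xf * I1"
  by (simp only: Z_def Dw_mult Dw_I1 Dw_P1 Dw_Ef) (simp add: algebra_simps)
lemma dt_Z: "fps_deriv Z = Ef * (- (fps_deriv Ef + (1 - Wf) * (Wf * Xf)) * I1\<^sup>2) + fps_deriv Ef * I1"
  by (simp only: Z_def fps_deriv_mult dt_I1 dt_P1)

lemma PDE: "fps_deriv Z * Dw U = Dw Z * (fps_deriv U + U^3 - U^2)"
proof -
  have "fps_X * (fps_deriv Z * Dw U) = fps_X * (Dw Z * (fps_deriv U + U^3 - U^2))"
    unfolding dt_Z Dw_U Dw_Z dt_U unfolding U_def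
    by (rule pde_alg[OF X_rel Ep_rel]) (use P1_I1 P2_I2 in \<open>simp_all add: P1_def P2_def\<close>)
  then show ?thesis by simp
qed

lemma ANTI: "Dw (E2f * I2) = Z * Dw U"
proof -
  have "Dw (E2f * I2) = Ef * I2 + E2f * (- (Xf - 1) * I2\<^sup>2)"
    by (simp add: Dw_I2 Dw_P2 Dw_E2f)
  also have "\<dots> = (Ef * I1) * (Ef * (- (Xf - 1) * I2\<^sup>2) + Xf * I2)"
    by (rule anti_alg[OF X_rel E_rel]) (use P1_I1 P2_I2 in \<open>simp_all add: P1_def P2_def\<close>)
  finally show ?thesis by (simp add: Z_def Dw_U)
qed

lemma Dw_cube: "Dw (F^3) = 3 * F^2 * Dw F"
  using Dw_power[of F 3] by simp
lemma Dw_sq: "Dw (F^2) = 2 * F * Dw F"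
  using Dw_power[of F 2] by simp
lemma dt_cube: "fps_deriv ((F::real poly fps)^3) = 3 * F^2 * fps_deriv F"
  using fps_deriv_power'[of F 3] by (simp add: mult_ac)
lemma dt_sq: "fps_deriv ((F::real poly fps)^2) = 2 * F * fps_deriv F"
  using fps_deriv_power'[of F 2] by (simp add: mult_ac)

lemma integrand:
  "fps_deriv (U^k * Z * Dw U) =
     Dw (U^k * (fps_deriv U + U^3 - U^2) * Z) - (of_nat (k+3) * U^(k+2) - of_nat (k+2) * U^(k+1)) * Z * Dw U"
proof -
  define S where "S = fps_deriv U + U^3 - U^2"
  have DS: "Dw S = fps_deriv (Dw U) + 3 * U^2 * Dw U - 2 * U * Dw U"
    by (simp add: S_def Dw_deriv Dw_cube Dw_sq)
  have pde: "fps_deriv Z * Dw U = Dw Z * S" using PDE by (simp add: S_def)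
  have dpow: "Dw (U^k) = of_nat k * U^(k-1) * Dw U" by (rule Dw_power)
  have tpow: "fps_deriv (U^k) = of_nat k * fps_deriv U * U^(k-1)" by (rule fps_deriv_power')
  have d1: "fps_deriv (U^k * Z * Dw U) = fps_deriv (U^k) * Z * Dw U + U^k * (fps_deriv Z * Dw U) + U^k * Z * fps_deriv (Dw U)"
    by (simp add: algebra_simps)
  have d2: "Dw (U^k * S * Z) = Dw (U^k) * S * Z + U^k * Dw S * Z + U^k * (Dw Z * S)"
    by (simp add: algebra_simps)
  have key: "of_nat k * U^(k-1) * (U^3 - U^2) = (of_nat k) * U^(k+2) - of_nat k * U^(k+1)"
  proof (cases k)
    case 0 then show ?thesis by simp
  next
    case (Suc m) then show ?thesis by (simp add: algebra_simps power2_eq_square power3_eq_cube)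
  qed
  have key2: "U^k * (3 * U^2 - 2 * U) = 3 * U^(k+2) - 2 * U^(k+1)"
    by (simp add: algebra_simps power2_eq_square)
  have "Dw (U^k * S * Z) - fps_deriv (U^k * Z * Dw U)
        = (of_nat k * U^(k-1) * (S - fps_deriv U) + U^k * (3 * U^2 - 2 * U)) * Z * Dw U"
    unfolding d1 d2 dpow tpow DS pde by (simp add: algebra_simps)
  also have "S - fps_deriv U = U^3 - U^2" by (simp add: S_def)
  also have "of_nat k * U^(k-1) * (U^3 - U^2) + U^k * (3 * U^2 - 2 * U)
       = of_nat (k+3) * U^(k+2) - of_nat (k+2) * U^(k+1)"
    unfolding key key2 by (simp add: algebra_simps)
  finally show ?thesis by (simp add: S_def algebra_simps)
qed

definition C :: "nat \<Rightarrow> real fps" where "C k = IF (U^k * Z * Dw U)"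

lemma Ev_U0: "Ev 0 U = 0" by (simp add: U_def Ev0_Ef)
lemma Ev_P2_1: "Ev 1 P2 = e1" by (simp add: P2_def Ev1_Ef Ev1_Wf)
lemma Ev_I2_1: "e1 * Ev 1 I2 = 1"
proof -
  have "Ev 1 (P2 * I2) = 1" by (simp add: P2_I2)
  then show ?thesis by (simp only: Ev_mult Ev_P2_1)
qed
lemma Ev_U1: "Ev 1 U = 1" by (simp add: U_def Ev1_Ef Ev_I2_1)

lemma Ev_B: "Ev a (U^k * (fps_deriv U + U^3 - U^2) * Z) = 0" if "a = 0 \<or> a = 1"
  using that by (auto simp: Ev_deriv Ev_U0 Ev_U1)

lemma of_nat_fps_nth: "fps_nth (of_nat m * F) n = of_nat m * fps_nth (F :: 'a::comm_ring_1 fps) n"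
  by (simp add: fps_of_nat[symmetric])

lemma C_rec: "fps_deriv (C k) = of_nat (k+2) * C (k+1) - of_nat (k+3) * C (k+2)"
proof -
  have z1: "Ev 1 (U^k * (fps_deriv U + U^3 - U^2) * Z) = 0" by (rule Ev_B) simp
  have z0: "Ev 0 (U^k * (fps_deriv U + U^3 - U^2) * Z) = 0" by (rule Ev_B) simp
  have "fps_deriv (C k) = IF (fps_deriv (U^k * Z * Dw U))" by (simp only: C_def IF_deriv)
  also have "\<dots> = IF (Dw (U^k * (fps_deriv U + U^3 - U^2) * Z))
       - IF (of_nat (k+3) * (U^(k+2) * Z * Dw U)) + IF (of_nat (k+2) * (U^(k+1) * Z * Dw U))"
    unfolding integrand by (simp add: algebra_simps)
  also have "\<dots> = of_nat (k+2) * C (k+1) - of_nat (k+3) * C (k+2)"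
    unfolding IF_Dw IF_of_nat_mult C_def z1 z0 by simp
  finally show ?thesis .
qed

lemma I2_0: "fps_nth I2 0 = 1" by (simp add: I2_def)
lemma I1_0: "fps_nth I1 0 = 1" by (simp add: I1_def)
lemma U_0: "fps_nth U 0 = pU" by (simp add: U_def I2_0 Ef_def pU_monom')
lemma Z_0: "fps_nth Z 0 = pU" by (simp add: Z_def I1_0 Ef_def pU_monom')
lemma DwU_0: "fps_nth (Dw U) 0 = 1" by (simp add: U_0)

lemma C_nth: "fps_nth (C k) n = Ip (pU^k * Qp n) / fact n"
proof (induction n arbitrary: k)
  case 0
  show ?case by (simp add: C_def fps_nth_power_0 U_0 Z_0 DwU_0)
next
  case (Suc n)
  have "of_nat (Suc n) * fps_nth (C k) (Suc n) = fps_nth (fps_deriv (C k)) n" by simp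
  also have "\<dots> = real (k+2) * fps_nth (C (k+1)) n - real (k+3) * fps_nth (C (k+2)) n"
    by (simp only: C_rec fps_sub_nth of_nat_fps_nth)
  also have "\<dots> = ((real k + 2) * Ip (pU^(k+1) * Qp n) - (real k + 3) * Ip (pU^(k+2) * Qp n)) / fact n"
    using Suc.IH by (simp add: diff_divide_distrib)
  also have "\<dots> = Ip (pU^k * Qp (Suc n)) / fact n" by (simp only: c_rec)
  finally have "of_nat (Suc n) * fps_nth (C k) (Suc n) = Ip (pU^k * Qp (Suc n)) / fact n" .
  then show ?case by (simp add: field_simps del: of_nat_Suc)
qed

lemma Phi_eq: "C 0 * e1 = e2"
proof -
  have "C 0 = IF (Z * Dw U)" by (simp add: C_def)
  also have "\<dots> = IF (Dw (E2f * I2))" by (simp only: ANTI)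
  also have "\<dots> = Ev 1 E2f * Ev 1 I2 - Ev 0 E2f * Ev 0 I2" by (simp only: IF_Dw Ev_mult)
  also have "\<dots> = e2 * Ev 1 I2" by (simp add: Ev1_E2f Ev0_E2f)
  finally have "C 0 * e1 = e2 * (e1 * Ev 1 I2)" by (simp add: mult_ac)
  then show ?thesis using Ev_I2_1 by simp
qed

definition G :: "real fps" where "G = fps_X / (fps_exp 1 - 1)"

lemma expm1_nth1: "fps_nth (fps_exp 1 - 1 :: real fps) 1 = 1" by simp

lemma expm1_ne: "fps_exp 1 - 1 \<noteq> (0::real fps)"
proof
  assume "fps_exp 1 - 1 = (0::real fps)"
  then have "fps_nth (fps_exp 1 - 1 :: real fps) 1 = 0" by simp
  then show False using expm1_nth1 by simp
qed

lemma G_mult: "G * (fps_exp 1 - 1) = fps_X"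
  unfolding G_def
proof (rule fps_times_divide_eq)
  show "fps_exp 1 - 1 \<noteq> (0::real fps)" by (rule expm1_ne)
  have "subdegree (fps_exp 1 - 1 :: real fps) \<le> 1"
    by (rule subdegree_leI) (simp)
  then show "subdegree (fps_exp 1 - 1 :: real fps) \<le> subdegree (fps_X :: real fps)" by simp
qed

lemma Phi_X: "C 0 * fps_X = 1 - G"
proof -
  have a: "(C 0 * fps_X) * (fps_exp 1 - 1) = fps_exp 1 - 1 - fps_X"
  proof -
    have "(C 0 * fps_X) * (fps_exp 1 - 1) = fps_X * (fps_X * (C 0 * e1))"
      by (simp add: e1_rel[symmetric] mult_ac)
    also have "\<dots> = fps_X * (fps_X * e2)" by (simp add: Phi_eq)
    also have "\<dots> = fps_X * e1 - fps_X" by (simp only: e2_rel) (simp add: algebra_simps)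
    also have "\<dots> = fps_exp 1 - 1 - fps_X" by (simp add: e1_rel)
    finally show ?thesis .
  qed
  have b: "(1 - G) * (fps_exp 1 - 1) = fps_exp 1 - 1 - fps_X"
    using G_mult by (simp add: algebra_simps)
  from a b have "(C 0 * fps_X) * (fps_exp 1 - 1) = (1 - G) * (fps_exp 1 - 1)" by simp
  then show ?thesis using expm1_ne by simp
qed

theorem propositionC1:
  fixes n :: nat
  assumes "n \<ge> 2"
  shows "f n 0 = - bernoulli n / real n"
proof -
  obtain m where n: "n = Suc (Suc m)" using assms by (metis add_2_eq_Suc le_Suc_ex)
  have "fps_nth (C 0 * fps_X) n = fps_nth (1 - G) n" by (simp add: Phi_X)
  then have g: "fps_nth G n = - fps_nth (C 0) (Suc m)" by (simp add: n)
  have c: "fps_nth (C 0) (Suc m) = Ip (Qp (Suc m)) / fact (Suc m)" by (simp add: C_nth)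
  have b: "bernoulli n = fact n * fps_nth G n" by (simp add: bernoulli_def G_def)
  have fa: "(fact n :: real) = real n * fact (Suc m)" by (simp add: n del: of_nat_Suc)
  have "- bernoulli n / real n = Ip (Qp (Suc m))"
    using b g c fa by (simp add: n field_simps del: of_nat_Suc)
  moreover have "f n 0 = Ip (Qp (Suc m))" by (simp add: n f_Q del: f.simps)
  ultimately show ?thesis by simp
qed

end
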